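(* Let $\varphi$ be the move interpretation on $2$-cells of $\mathbf{Toff}$ (the unique extension, compatible with $\star_0$ as cartesian product and $\star_1$ as composition of maps, of $\varphi(s)(v,w)=(w{\tt l},v{\tt r})$, $\varphi(N)(v)=v{\tt t}$, $\varphi(T_2)(v,w)=(v{\tt t},w{\tt t})$, $\varphi(T_3)(v,w,z)=(v{\tt t},w{\tt t},z{\tt t})$, identities mapped to identities). Then for every $3$-generator $\rho\in R_3$ with source $2$-cell $A$ and target $2$-cell $B$ on $n$ wires, $\varphi(A)(\vec v)>_{{\tt M}^n}\varphi(B)(\vec v)$ for all $\vec v\in{\tt M}^n$. For instance, for the second permutation rule $\varphi(A)(v,w,z)=(z{\tt l}{\tt l},w{\tt l}{\tt r},v{\tt r}{\tt r})$ and $\varphi(B)(v,w,z)=(z{\tt l}{\tt l},w{\tt r}{\tt l},v{\tt r}{\tt r})$.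
   Context: $\mathbf{Toff}$ is the free strict $3$-category generated by: one $0$-cell $\ast$; one $1$-generator, the wire $1:\ast\to\ast$; four $2$-generators $s:2\Rightarrow2$ (SWAP), $N:1\Rightarrow1$ (NOT), $T_2:2\Rightarrow2$, $T_3:3\Rightarrow3$; and the set $R_3$ of $3$-generators listed below. Write $\star_0$ for parallel composition (left to right), $\star_1$ for sequential composition (diagrammatic order, first the left operand then the right one), $1$ also for the identity $2$-cell on one wire and $\mathrm{id}_n$ for the identity $2$-cell on $n$ wires. Let $L_3=(s\star_01)\star_1(1\star_0s)$, $L_4=(s\star_01\star_01)\star_1(1\star_0s\star_01)\star_1(1\star_01\star_0s)$, $L'_3=(1\star_0s)\star_1(s\star_01)$, $L'_4=(1\star_01\star_0s)\star_1(1\star_0s\star_01)\star_1(s\star_01\star_01)$. $R_3$ consists of: $s\star_1s\Rrightarrow\mathrm{id}_2$; $(s\star_01)\star_1(1\star_0s)\star_1(s\star_01)\Rrightarrow(1\star_0s)\star_1(s\star_01)\star_1(1\star_0s)$; $N\star_1N\Rrightarrow\mathrm{id}_1$; $T_2\star_1T_2\Rrightarrow\mathrm{id}_2$; $T_3\star_1T_3\Rrightarrow\mathrm{id}_3$; $s\star_1(N\star_01)\Rrightarrow(1\star_0N)\star_1s$; $s\star_1(1\star_0N)\Rrightarrow(N\star_01)\star_1s$; $L_3\star_1(T_2\star_01)\Rrightarrow(1\star_0T_2)\star_1L_3$; $L'_3\star_1(1\star_0T_2)\Rrightarrow(T_2\star_01)\star_1L'_3$; $L_4\star_1(T_3\star_01)\Rrightarrow(1\star_0T_3)\star_1L_4$;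 $L'_4\star_1(1\star_0T_3)\Rrightarrow(T_3\star_01)\star_1L'_4$; $(s\star_01)\star_1T_3\Rrightarrow T_3\star_1(s\star_01)$. ${\tt M}$ is the free monoid of words on ${\tt l},{\tt r},{\tt t}$ (written left to right, $v{\tt t}$ appends ${\tt t}$), ordered by $<_{\tt M}$: first by length, then lexicographically with ${\tt t}<{\tt r}<{\tt l}$; on ${\tt M}^n$, $\vec x<_{{\tt M}^n}\vec y$ iff $x_i\le_{\tt M}y_i$ for all $i$ and $\vec x\ne\vec y$. *)

theory Defs
  imports Main
begin

datatype letter = Ll | Lr | Lt

type_synonym word = "letter list"   (* written left to right; v t = v @ [Lt] *)

fun rank :: "letter \<Rightarrow> nat" where
  "rank Lt = 0" | "rank Lr = 1" | "rank Ll = 2"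

definition mless :: "word \<Rightarrow> word \<Rightarrow> bool" where
  "mless x y \<longleftrightarrow> length x < length y \<or>
     (length x = length y \<and> (map rank x, map rank y) \<in> lexord {(a, b). a < b})"

definition mle :: "word \<Rightarrow> word \<Rightarrow> bool" where
  "mle x y \<longleftrightarrow> mless x y \<or> x = y"

definition mnless :: "word list \<Rightarrow> word list \<Rightarrow> bool" where
  "mnless xs ys \<longleftrightarrow> list_all2 mle xs ys \<and> xs \<noteq> ys"

datatype cell = Swap | NotG | Tof2 | Tof3 | Idc nat | Par cell cell | Seq cell cell

fun arity :: "cell \<Rightarrow> nat" where
  "arity Swap = 2" | "arity NotG = 1" | "arity Tof2 = 2" | "arity Tof3 = 3"
| "arity (Idc n) = n" | "arity (Par a b) = arity a + arity b" | "arity (Seq a b) = arity a"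

text \<open>Par = parallel composition \<star>0 (left to right); Seq a b = a \<star>1 b (first a, then b).\<close>
fun wf :: "cell \<Rightarrow> bool" where
  "wf (Par a b) = (wf a \<and> wf b)"
| "wf (Seq a b) = (wf a \<and> wf b \<and> arity a = arity b)"
| "wf _ = True"

fun phi :: "cell \<Rightarrow> word list \<Rightarrow> word list" where
  "phi Swap vs = (case vs of [v, w] \<Rightarrow> [w @ [Ll], v @ [Lr]] | _ \<Rightarrow> vs)"
| "phi NotG vs = (case vs of [v] \<Rightarrow> [v @ [Lt]] | _ \<Rightarrow> vs)"
| "phi Tof2 vs = (case vs of [v, w] \<Rightarrow> [v @ [Lt], w @ [Lt]] | _ \<Rightarrow> vs)"
| "phi Tof3 vs = (case vs of [v, w, z] \<Rightarrow> [v @ [Lt], w @ [Lt], z @ [Lt]] | _ \<Rightarrow> vs)"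
| "phi (Idc n) vs = vs"
| "phi (Par a b) vs = phi a (take (arity a) vs) @ phi b (drop (arity a) vs)"
| "phi (Seq a b) vs = phi b (phi a vs)"

abbreviation one :: cell where "one \<equiv> Idc 1"

definition L3 :: cell where "L3 = Seq (Par Swap one) (Par one Swap)"
definition L4 :: cell where
  "L4 = Seq (Seq (Par (Par Swap one) one) (Par (Par one Swap) one)) (Par (Par one one) Swap)"
definition L3' :: cell where "L3' = Seq (Par one Swap) (Par Swap one)"
definition L4' :: cell where
  "L4' = Seq (Seq (Par (Par one one) Swap) (Par (Par one Swap) one)) (Par (Par Swap one) one)"

definition R3 :: "(cell \<times> cell) set" where
  "R3 = {
    (Seq Swap Swap, Idc 2),
    (Seq (Seq (Par Swap one) (Par one Swap)) (Par Swap one),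
       Seq (Seq (Par one Swap) (Par Swap one)) (Par one Swap)),
    (Seq NotG NotG, Idc 1),
    (Seq Tof2 Tof2, Idc 2),
    (Seq Tof3 Tof3, Idc 3),
    (Seq Swap (Par NotG one), Seq (Par one NotG) Swap),
    (Seq Swap (Par one NotG), Seq (Par NotG one) Swap),
    (Seq L3 (Par Tof2 one), Seq (Par one Tof2) L3),
    (Seq L3' (Par one Tof2), Seq (Par Tof2 one) L3'),
    (Seq L4 (Par Tof3 one), Seq (Par one Tof3) L4),
    (Seq L4' (Par one Tof3), Seq (Par Tof3 one) L4'),
    (Seq (Par Swap one) Tof3, Seq Tof3 (Par Swap one)) }"

end

theory Submission
  imports Defs
begin
lemma lexpre: "((u::nat list) @ x, u @ y) \<in> lexord {(a, b). a < b} \<longleftrightarrow>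
   (x, y) \<in> lexord {(a, b). a < b}"
  by (simp add: lexord_same_pref_iff irrefl_def)
lemma len1: "length vs = Suc 0 \<Longrightarrow> \<exists>a. vs = [a]"
  by (cases vs) auto
lemma len2: "length vs = 2 \<Longrightarrow> \<exists>a b. vs = [a,b]"
  by (cases vs; cases "tl vs") auto
lemma len3: "length vs = 3 \<Longrightarrow> \<exists>a b c. vs = [a,b,c]"
  by (cases vs; cases "tl vs"; cases "tl (tl vs)") auto
lemma len4: "length vs = 4 \<Longrightarrow> \<exists>a b c d. vs = [a,b,c,d]"
  by (cases vs; cases "tl vs"; cases "tl (tl vs)"; cases "tl (tl (tl vs))") auto

lemma len1E: "length vs = n \<Longrightarrow> n = 1 \<Longrightarrow> (\<And>a. vs = [a] \<Longrightarrow> P) \<Longrightarrow> P"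
  using len1[of vs] by auto
lemma len2E: "length vs = n \<Longrightarrow> n = 2 \<Longrightarrow> (\<And>a b. vs = [a,b] \<Longrightarrow> P) \<Longrightarrow> P"
  using len2[of vs] by blast
lemma len3E: "length vs = n \<Longrightarrow> n = 3 \<Longrightarrow> (\<And>a b c. vs = [a,b,c] \<Longrightarrow> P) \<Longrightarrow> P"
  using len3[of vs] by blast
lemma len4E: "length vs = n \<Longrightarrow> n = 4 \<Longrightarrow> (\<And>a b c d. vs = [a,b,c,d] \<Longrightarrow> P) \<Longrightarrow> P"
  using len4[of vs] by blast

definition ok :: "cell \<Rightarrow> cell \<Rightarrow> bool" where
 "ok A B \<longleftrightarrow> wf A \<and> wf B \<and> arity A = arity B \<and>
           (\<forall>vs. length vs = arity A \<longrightarrow> mnless (phi B vs) (phi A vs))"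

lemma r1: "ok (Seq Swap Swap) (Idc 2)" 
  unfolding ok_def
  apply (intro conjI allI impI)
     apply (simp_all add: L3_def L4_def L3'_def L4'_def)[3]
  apply ((erule len1E, (simp add: L3_def L4_def L3'_def L4'_def; fail))
     | (erule len2E, (simp add: L3_def L4_def L3'_def L4'_def; fail))
     | (erule len3E, (simp add: L3_def L4_def L3'_def L4'_def; fail))
     | (erule len4E, (simp add: L3_def L4_def L3'_def L4'_def; fail)))
  apply (simp add: mnless_def mle_def mless_def lexpre L3_def L4_def L3'_def L4'_def)
  done
lemma r2: "ok (Seq (Seq (Par Swap one) (Par one Swap)) (Par Swap one))
       (Seq (Seq (Par one Swap) (Par Swap one)) (Par one Swap))" 
  unfolding ok_def
  apply (intro conjI allI impI)
     apply (simp_all add: L3_def L4_def L3'_def L4'_def)[3]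
  apply ((erule len1E, (simp add: L3_def L4_def L3'_def L4'_def; fail))
     | (erule len2E, (simp add: L3_def L4_def L3'_def L4'_def; fail))
     | (erule len3E, (simp add: L3_def L4_def L3'_def L4'_def; fail))
     | (erule len4E, (simp add: L3_def L4_def L3'_def L4'_def; fail)))
  apply (simp add: mnless_def mle_def mless_def lexpre L3_def L4_def L3'_def L4'_def)
  done
lemma r3: "ok (Seq NotG NotG) (Idc 1)" 
  unfolding ok_def
  apply (intro conjI allI impI)
     apply (simp_all add: L3_def L4_def L3'_def L4'_def)[3]
  apply ((erule len1E, (simp add: L3_def L4_def L3'_def L4'_def; fail))
     | (erule len2E, (simp add: L3_def L4_def L3'_def L4'_def; fail))
     | (erule len3E, (simp add: L3_def L4_def L3'_def L4'_def; fail))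
     | (erule len4E, (simp add: L3_def L4_def L3'_def L4'_def; fail)))
  apply (simp add: mnless_def mle_def mless_def lexpre L3_def L4_def L3'_def L4'_def)
  done
lemma r4: "ok (Seq Tof2 Tof2) (Idc 2)" 
  unfolding ok_def
  apply (intro conjI allI impI)
     apply (simp_all add: L3_def L4_def L3'_def L4'_def)[3]
  apply ((erule len1E, (simp add: L3_def L4_def L3'_def L4'_def; fail))
     | (erule len2E, (simp add: L3_def L4_def L3'_def L4'_def; fail))
     | (erule len3E, (simp add: L3_def L4_def L3'_def L4'_def; fail))
     | (erule len4E, (simp add: L3_def L4_def L3'_def L4'_def; fail)))
  apply (simp add: mnless_def mle_def mless_def lexpre L3_def L4_def L3'_def L4'_def)
  done
lemma r5: "ok (Seq Tof3 Tof3) (Idc 3)" 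
  unfolding ok_def
  apply (intro conjI allI impI)
     apply (simp_all add: L3_def L4_def L3'_def L4'_def)[3]
  apply ((erule len1E, (simp add: L3_def L4_def L3'_def L4'_def; fail))
     | (erule len2E, (simp add: L3_def L4_def L3'_def L4'_def; fail))
     | (erule len3E, (simp add: L3_def L4_def L3'_def L4'_def; fail))
     | (erule len4E, (simp add: L3_def L4_def L3'_def L4'_def; fail)))
  apply (simp add: mnless_def mle_def mless_def lexpre L3_def L4_def L3'_def L4'_def)
  done
lemma r6: "ok (Seq Swap (Par NotG one)) (Seq (Par one NotG) Swap)" 
  unfolding ok_def
  apply (intro conjI allI impI)
     apply (simp_all add: L3_def L4_def L3'_def L4'_def)[3]
  apply ((erule len1E, (simp add: L3_def L4_def L3'_def L4'_def; fail))
     | (erule len2E, (simp add: L3_def L4_def L3'_def L4'_def; fail))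
     | (erule len3E, (simp add: L3_def L4_def L3'_def L4'_def; fail))
     | (erule len4E, (simp add: L3_def L4_def L3'_def L4'_def; fail)))
  apply (simp add: mnless_def mle_def mless_def lexpre L3_def L4_def L3'_def L4'_def)
  done
lemma r7: "ok (Seq Swap (Par one NotG)) (Seq (Par NotG one) Swap)" 
  unfolding ok_def
  apply (intro conjI allI impI)
     apply (simp_all add: L3_def L4_def L3'_def L4'_def)[3]
  apply ((erule len1E, (simp add: L3_def L4_def L3'_def L4'_def; fail))
     | (erule len2E, (simp add: L3_def L4_def L3'_def L4'_def; fail))
     | (erule len3E, (simp add: L3_def L4_def L3'_def L4'_def; fail))
     | (erule len4E, (simp add: L3_def L4_def L3'_def L4'_def; fail)))
  apply (simp add: mnless_def mle_def mless_def lexpre L3_def L4_def L3'_def L4'_def)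
  done
lemma r8: "ok (Seq L3 (Par Tof2 one)) (Seq (Par one Tof2) L3)" 
  unfolding ok_def
  apply (intro conjI allI impI)
     apply (simp_all add: L3_def L4_def L3'_def L4'_def)[3]
  apply ((erule len1E, (simp add: L3_def L4_def L3'_def L4'_def; fail))
     | (erule len2E, (simp add: L3_def L4_def L3'_def L4'_def; fail))
     | (erule len3E, (simp add: L3_def L4_def L3'_def L4'_def; fail))
     | (erule len4E, (simp add: L3_def L4_def L3'_def L4'_def; fail)))
  apply (simp add: mnless_def mle_def mless_def lexpre L3_def L4_def L3'_def L4'_def)
  done
lemma r9: "ok (Seq L3' (Par one Tof2)) (Seq (Par Tof2 one) L3')" 
  unfolding ok_def
  apply (intro conjI allI impI)
     apply (simp_all add: L3_def L4_def L3'_def L4'_def)[3]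
  apply ((erule len1E, (simp add: L3_def L4_def L3'_def L4'_def; fail))
     | (erule len2E, (simp add: L3_def L4_def L3'_def L4'_def; fail))
     | (erule len3E, (simp add: L3_def L4_def L3'_def L4'_def; fail))
     | (erule len4E, (simp add: L3_def L4_def L3'_def L4'_def; fail)))
  apply (simp add: mnless_def mle_def mless_def lexpre L3_def L4_def L3'_def L4'_def)
  done
lemma r10: "ok (Seq L4 (Par Tof3 one)) (Seq (Par one Tof3) L4)" 
  unfolding ok_def
  apply (intro conjI allI impI)
     apply (simp_all add: L3_def L4_def L3'_def L4'_def)[3]
  apply ((erule len1E, (simp add: L3_def L4_def L3'_def L4'_def; fail))
     | (erule len2E, (simp add: L3_def L4_def L3'_def L4'_def; fail))
     | (erule len3E, (simp add: L3_def L4_def L3'_def L4'_def; fail))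
     | (erule len4E, (simp add: L3_def L4_def L3'_def L4'_def; fail)))
  apply (simp add: mnless_def mle_def mless_def lexpre L3_def L4_def L3'_def L4'_def)
  done
lemma r11: "ok (Seq L4' (Par one Tof3)) (Seq (Par Tof3 one) L4')" 
  unfolding ok_def
  apply (intro conjI allI impI)
     apply (simp_all add: L3_def L4_def L3'_def L4'_def)[3]
  apply ((erule len1E, (simp add: L3_def L4_def L3'_def L4'_def; fail))
     | (erule len2E, (simp add: L3_def L4_def L3'_def L4'_def; fail))
     | (erule len3E, (simp add: L3_def L4_def L3'_def L4'_def; fail))
     | (erule len4E, (simp add: L3_def L4_def L3'_def L4'_def; fail)))
  apply (simp add: mnless_def mle_def mless_def lexpre L3_def L4_def L3'_def L4'_def)
  done
lemma r12: "ok (Seq (Par Swap one) Tof3) (Seq Tof3 (Par Swap one))" 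
  unfolding ok_def
  apply (intro conjI allI impI)
     apply (simp_all add: L3_def L4_def L3'_def L4'_def)[3]
  apply ((erule len1E, (simp add: L3_def L4_def L3'_def L4'_def; fail))
     | (erule len2E, (simp add: L3_def L4_def L3'_def L4'_def; fail))
     | (erule len3E, (simp add: L3_def L4_def L3'_def L4'_def; fail))
     | (erule len4E, (simp add: L3_def L4_def L3'_def L4'_def; fail)))
  apply (simp add: mnless_def mle_def mless_def lexpre L3_def L4_def L3'_def L4'_def)
  done

theorem mainTheorem6:
  shows "\<forall>(A, B) \<in> R3. wf A \<and> wf B \<and> arity A = arity B \<and>
           (\<forall>vs. length vs = arity A \<longrightarrow> mnless (phi B vs) (phi A vs))"
  using r1 r2 r3 r4 r5 r6 r7 r8 r9 r10 r11 r12 unfolding R3_def ok_def Ball_def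
  by (simp only: insert_iff empty_iff) blast
end
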